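(* Let $K$ be an idempotent ordered TGP-$\omega$-valuation monoid, $AP$ a finite set of atomic propositions, $k\in K\setminus\{\mathbf{0},\mathbf{1}\}$ and $\varphi\in k\text{-}\vee\text{-}t\text{-}RULTL(K,AP)$. Then $\|\varphi\|:(\mathcal{P}(AP))^{\omega}\to K$ is $k$-safe.
   Context: Idempotent ordered TGP-$\omega$-valuation monoid $(K,+,\cdot,Val^{\omega},\mathbf{0},\mathbf{1})$: complete monoid $(K,+,\mathbf{0})$ (infinitary sums over arbitrary index sets with the usual axioms), idempotent, totally ordered by the natural order $k\le k'$ iff $k'=k'+k$; $Val^{\omega}$ maps finitely-valued sequences in $K$ to $K$; $\cdot$ has zero $\mathbf{0}$ and unit $\mathbf{1}$; $Val^{\omega}=\mathbf{0}$ if some entry is $\mathbf{0}$; $Val^{\omega}(\mathbf{1}^{\omega})=\mathbf{1}$; $\sum_I(k\cdot\mathbf{1})=k\cdot\sum_I\mathbf{1}$; $Val^{\omega}$ distributes over finite sums of families each entirely in $L\setminus\{\mathbf{0},\mathbf{1}\}$ or entirely in $\{\mathbf{0},\mathbf{1}\}$ ($L\subseteq K$ finite); $Val^{\omega}(\mathbf{1},k_1,\dots)=Val^{\omega}(k_1,\dots)$, $Val^{\omega}(k,\mathbf{1},\dots)=k$, $k\le\mathbf{1}$, $k_i\ge k\ \forall i\Rightarrow Val^{\omega}((k_i)_i)\ge k$. Weighted LTL over $AP$ and $K$: $\varphi::=k\mid a\mid\neg a\mid\varphi\vee\varphi\mid\varphi\wedge\varphi\mid\bigcirc\varphi\mid\varphi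 U\varphi\mid\square\varphi$, semantics: $(\|k\|,w)=k$; $(\|a\|,w)=\mathbf{1}$ if $a\in w(0)$ else $\mathbf{0}$; $\neg a$ dually; $\vee\mapsto+$, $\wedge\mapsto\cdot$; $(\|\bigcirc\varphi\|,w)=(\|\varphi\|,w_{\ge1})$; $(\|\varphi U\psi\|,w)=\sum_{i\ge0}Val^{\omega}((\|\varphi\|,w_{\ge0}),\dots,(\|\varphi\|,w_{\ge i-1}),(\|\psi\|,w_{\ge i}),\mathbf{1},\mathbf{1},\dots)$; $(\|\square\varphi\|,w)=Val^{\omega}(((\|\varphi\|,w_{\ge i}))_{i\ge0})$. $true:=\mathbf{1}$, $\varphi\tilde U\psi:=\square\varphi\vee(\varphi U\psi)$. $sbLTL(K,AP)$: $\varphi::=true\mid a\mid\neg a\mid\varphi\vee\varphi\mid\varphi\wedge\varphi\mid\bigcirc\varphi\mid\varphi\tilde U\varphi\mid\square\varphi$. $L_k=\{k'\in K\mid k'\ge k\}$. $k\text{-}stLTL(K,AP)$: formulas $\bigvee_{1\le i\le n}(k_i\wedge\varphi_i)$, $k_i\in L_k\setminus\{\mathbf{0},\mathbf{1}\}$, $\varphi_i\in sbLTL(K,AP)$. $k\text{-}\vee\text{-}t\text{-}RULTL(K,AP)$ is the least class of formulas such that: (1) every $k'\in L_k$ is in it; (2) $sbLTL(K,AP)\subseteq$ it; (3) $k\text{-}stLTL(K,AP)\subseteq$ it; (4) closed under $\bigcirc$; (5) if $\varphi,\psi\in k\text{-}stLTL(K,AP)$ then $\varphi\vee\psi$ is in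 it; (6) if $\varphi\in sbLTL(K,AP)$ and $\psi\in k\text{-}stLTL(K,AP)$, or $\psi=\xi\tilde U\lambda$, or $\psi=\square\xi$ with $\xi,\lambda\in k\text{-}stLTL(K,AP)$, then $\varphi\wedge\psi,\psi\wedge\varphi$ are in it; (7) if $\varphi,\psi\in k\text{-}stLTL(K,AP)$ then $\varphi\tilde U\psi$ is in it; (8) if $\varphi\in k\text{-}stLTL(K,AP)$ then $\square\varphi$ is in it. A series $s$ is $k$-safe if for every $w$: whenever for every $i>0$ there is $u$ with $(s,w_{<i}u)\ge k$ ($w_{<i}$ the length-$i$ prefix), then $(s,w)\ge k$. *)

theory Defs
  imports Main
begin

text \<open>Arbitrary index sets are modelled by subsets of
  the (continuum-sized) type nat => nat; every index set the definitions need
  (subsets of nat, embedded as constant functions, and products of countably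
  many finite subsets of nat) lives there.\<close>
type_synonym idx = "nat \<Rightarrow> nat"

record 'k tgp =
  zer :: 'k
  one :: 'k
  pl  :: "'k \<Rightarrow> 'k \<Rightarrow> 'k"
  tm  :: "'k \<Rightarrow> 'k \<Rightarrow> 'k"
  Val :: "(nat \<Rightarrow> 'k) \<Rightarrow> 'k"
  Sum :: "(idx \<Rightarrow> 'k) \<Rightarrow> idx set \<Rightarrow> 'k"

definition nle :: "'k tgp \<Rightarrow> 'k \<Rightarrow> 'k \<Rightarrow> bool" where
  "nle K a b \<longleftrightarrow> b = pl K b a"

definition sumN :: "'k tgp \<Rightarrow> (nat \<Rightarrow> 'k) \<Rightarrow> nat set \<Rightarrow> 'k" where
  "sumN K g I = Sum K (\<lambda>f. g (f 0)) ((\<lambda>n (_::nat). n) ` I)"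

definition fin_valued :: "(nat \<Rightarrow> 'k) \<Rightarrow> bool" where
  "fin_valued s \<longleftrightarrow> finite (range s)"

definition idem_ordered_tgp :: "'k tgp \<Rightarrow> bool" where
  "idem_ordered_tgp K \<longleftrightarrow>
    \<comment> \<open>complete (commutative) monoid\<close>
    (\<forall>a b c. pl K (pl K a b) c = pl K a (pl K b c)) \<and>
    (\<forall>a b. pl K a b = pl K b a) \<and>
    (\<forall>a. pl K (zer K) a = a) \<and>
    (\<forall>f g I. (\<forall>i\<in>I. f i = g i) \<longrightarrow> Sum K f I = Sum K g I) \<and>
    (\<forall>f. Sum K f {} = zer K) \<and>
    (\<forall>f j. Sum K f {j} = f j) \<and>
    (\<forall>f j l. j \<noteq> l \<longrightarrow> Sum K f {j, l} = pl K (f j) (f l)) \<and>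
    (\<forall>f I J P. (\<Union>j\<in>J. P j) = I \<longrightarrow>
        (\<forall>j\<in>J. \<forall>j'\<in>J. j \<noteq> j' \<longrightarrow> P j \<inter> P j' = {}) \<longrightarrow>
        Sum K f I = Sum K (\<lambda>j. Sum K f (P j)) J) \<and>
    \<comment> \<open>idempotent\<close>
    (\<forall>a. pl K a a = a) \<and>
    \<comment> \<open>totally ordered by the natural order\<close>
    (\<forall>a b. nle K a b \<or> nle K b a) \<and>
    \<comment> \<open>zero and unit of the product\<close>
    (\<forall>a. tm K (zer K) a = zer K \<and> tm K a (zer K) = zer K) \<and>
    (\<forall>a. tm K (one K) a = a \<and> tm K a (one K) = a) \<and>
    \<comment> \<open>Val on finitely valued sequences\<close>
    (\<forall>s. fin_valued s \<longrightarrow> (\<exists>i. s i = zer K) \<longrightarrow> Val K s = zer K) \<and>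
    Val K (\<lambda>_. one K) = one K \<and>
    (\<forall>a I. Sum K (\<lambda>_. tm K a (one K)) I = tm K a (Sum K (\<lambda>_. one K) I)) \<and>
    \<comment> \<open>distributivity of Val over finite sums\<close>
    (\<forall>L (I :: nat \<Rightarrow> nat set) (d :: nat \<Rightarrow> nat \<Rightarrow> 'k). finite L \<longrightarrow>
        (\<forall>j. finite (I j)) \<longrightarrow>
        (\<forall>j. (\<forall>i\<in>I j. d j i \<in> L - {zer K, one K}) \<or> (\<forall>i\<in>I j. d j i \<in> {zer K, one K})) \<longrightarrow>
        Val K (\<lambda>j. sumN K (d j) (I j)) =
        Sum K (\<lambda>f. Val K (\<lambda>j. d j (f j))) {f. \<forall>j. f j \<in> I j}) \<and>
    (\<forall>s. fin_valued s \<longrightarrow> s 0 = one K \<longrightarrow> Val K s = Val K (\<lambda>i. s (Suc i))) \<and>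
    (\<forall>a. Val K (\<lambda>i. if i = 0 then a else one K) = a) \<and>
    (\<forall>a. nle K a (one K)) \<and>
    (\<forall>s a. fin_valued s \<longrightarrow> (\<forall>i. nle K a (s i)) \<longrightarrow> nle K a (Val K s))"

datatype ('k, 'a) wltl =
    Const 'k
  | Atom 'a
  | NAtom 'a
  | Or "('k, 'a) wltl" "('k, 'a) wltl"
  | And "('k, 'a) wltl" "('k, 'a) wltl"
  | Next "('k, 'a) wltl"
  | Until "('k, 'a) wltl" "('k, 'a) wltl"
  | Box "('k, 'a) wltl"

primrec atoms :: "('k, 'a) wltl \<Rightarrow> 'a set" where
  "atoms (Const c) = {}"
| "atoms (Atom a) = {a}"
| "atoms (NAtom a) = {a}"
| "atoms (Or p q) = atoms p \<union> atoms q"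
| "atoms (And p q) = atoms p \<union> atoms q"
| "atoms (Next p) = atoms p"
| "atoms (Until p q) = atoms p \<union> atoms q"
| "atoms (Box p) = atoms p"

definition suffix :: "nat \<Rightarrow> (nat \<Rightarrow> 'a set) \<Rightarrow> nat \<Rightarrow> 'a set" where
  "suffix i w = (\<lambda>j. w (i + j))"

primrec sem :: "'k tgp \<Rightarrow> ('k, 'a) wltl \<Rightarrow> (nat \<Rightarrow> 'a set) \<Rightarrow> 'k" where
  "sem K (Const c) w = c"
| "sem K (Atom a) w = (if a \<in> w 0 then one K else zer K)"
| "sem K (NAtom a) w = (if a \<notin> w 0 then one K else zer K)"
| "sem K (Or p q) w = pl K (sem K p w) (sem K q w)"
| "sem K (And p q) w = tm K (sem K p w) (sem K q w)"
| "sem K (Next p) w = sem K p (suffix 1 w)"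
| "sem K (Until p q) w =
     sumN K (\<lambda>i. Val K (\<lambda>j. if j < i then sem K p (suffix j w)
                             else if j = i then sem K q (suffix i w) else one K)) UNIV"
| "sem K (Box p) w = Val K (\<lambda>i. sem K p (suffix i w))"

definition wtrue :: "'k tgp \<Rightarrow> ('k, 'a) wltl" where
  "wtrue K = Const (one K)"

definition WUntil :: "('k, 'a) wltl \<Rightarrow> ('k, 'a) wltl \<Rightarrow> ('k, 'a) wltl" where
  "WUntil p q = Or (Box p) (Until p q)"

inductive_set sbLTL :: "'k tgp \<Rightarrow> ('k, 'a) wltl set" for K where
  "wtrue K \<in> sbLTL K"
| "Atom a \<in> sbLTL K"
| "NAtom a \<in> sbLTL K"
| "p \<in> sbLTL K \<Longrightarrow> q \<in> sbLTL K \<Longrightarrow> Or p q \<in> sbLTL K"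
| "p \<in> sbLTL K \<Longrightarrow> q \<in> sbLTL K \<Longrightarrow> And p q \<in> sbLTL K"
| "p \<in> sbLTL K \<Longrightarrow> Next p \<in> sbLTL K"
| "p \<in> sbLTL K \<Longrightarrow> q \<in> sbLTL K \<Longrightarrow> WUntil p q \<in> sbLTL K"
| "p \<in> sbLTL K \<Longrightarrow> Box p \<in> sbLTL K"

definition Lk :: "'k tgp \<Rightarrow> 'k \<Rightarrow> 'k set" where
  "Lk K k = {k'. nle K k k'}"

fun BigOr :: "('k, 'a) wltl list \<Rightarrow> ('k, 'a) wltl" where
  "BigOr [] = Const undefined"
| "BigOr [p] = p"
| "BigOr (p # ps) = Or p (BigOr ps)"

definition stLTL :: "'k tgp \<Rightarrow> 'k \<Rightarrow> ('k, 'a) wltl set" where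
  "stLTL K k = {BigOr (map (\<lambda>(c, p). And (Const c) p) xs) | xs.
      xs \<noteq> [] \<and> (\<forall>(c, p) \<in> set xs. c \<in> Lk K k - {zer K, one K} \<and> p \<in> sbLTL K)}"

inductive_set RULTL :: "'k tgp \<Rightarrow> 'k \<Rightarrow> ('k, 'a) wltl set" for K k where
  "c \<in> Lk K k \<Longrightarrow> Const c \<in> RULTL K k"
| "p \<in> sbLTL K \<Longrightarrow> p \<in> RULTL K k"
| "p \<in> stLTL K k \<Longrightarrow> p \<in> RULTL K k"
| "p \<in> RULTL K k \<Longrightarrow> Next p \<in> RULTL K k"
| "p \<in> stLTL K k \<Longrightarrow> q \<in> stLTL K k \<Longrightarrow> Or p q \<in> RULTL K k"
| "p \<in> sbLTL K \<Longrightarrow>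
     q \<in> stLTL K k \<or> (\<exists>x y. x \<in> stLTL K k \<and> y \<in> stLTL K k \<and> q = WUntil x y)
       \<or> (\<exists>x. x \<in> stLTL K k \<and> q = Box x) \<Longrightarrow>
     And p q \<in> RULTL K k"
| "p \<in> sbLTL K \<Longrightarrow>
     q \<in> stLTL K k \<or> (\<exists>x y. x \<in> stLTL K k \<and> y \<in> stLTL K k \<and> q = WUntil x y)
       \<or> (\<exists>x. x \<in> stLTL K k \<and> q = Box x) \<Longrightarrow>
     And q p \<in> RULTL K k"
| "p \<in> stLTL K k \<Longrightarrow> q \<in> stLTL K k \<Longrightarrow> WUntil p q \<in> RULTL K k"
| "p \<in> stLTL K k \<Longrightarrow> Box p \<in> RULTL K k"

definition conc :: "nat \<Rightarrow> (nat \<Rightarrow> 'a set) \<Rightarrow> (nat \<Rightarrow> 'a set) \<Rightarrow> nat \<Rightarrow> 'a set" where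
  "conc i w u = (\<lambda>j. if j < i then w j else u (j - i))"

definition k_safe :: "'k tgp \<Rightarrow> 'a set \<Rightarrow> 'k \<Rightarrow> ((nat \<Rightarrow> 'a set) \<Rightarrow> 'k) \<Rightarrow> bool" where
  "k_safe K AP k s \<longleftrightarrow>
    (\<forall>w. (\<forall>j. w j \<subseteq> AP) \<longrightarrow>
      (\<forall>i>0. \<exists>u. (\<forall>j. u j \<subseteq> AP) \<and> nle K k (s (conc i w u))) \<longrightarrow>
      nle K k (s w))"

end

theory Submission
  imports Defs
begin



definition cl :: "'a set \<Rightarrow> (nat \<Rightarrow> 'a set) set \<Rightarrow> bool" where
 "cl AP S \<longleftrightarrow> (\<forall>w. (\<forall>j. w j \<subseteq> AP) \<longrightarrow> (\<forall>i>0. \<exists>u. (\<forall>j. u j \<subseteq> AP) \<and> conc i w u \<in> S) \<longrightarrow> w \<in> S)"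

lemma clD: "cl AP S \<Longrightarrow> \<forall>j. w j \<subseteq> AP \<Longrightarrow> (\<And>i. i>0 \<Longrightarrow> \<exists>u. (\<forall>j. u j \<subseteq> AP) \<and> conc i w u \<in> S) \<Longrightarrow> w \<in> S"
  unfolding cl_def by simp
lemma clI: "(\<And>w. \<forall>j. w j \<subseteq> AP \<Longrightarrow> (\<And>i. i>0 \<Longrightarrow> \<exists>u. (\<forall>j. u j \<subseteq> AP) \<and> conc i w u \<in> S) \<Longrightarrow> w \<in> S) \<Longrightarrow> cl AP S"
  unfolding cl_def by simp

lemma k_safe_cl: "k_safe K AP k s \<longleftrightarrow> cl AP {w. nle K k (s w)}"
  unfolding k_safe_def cl_def by simp

lemma conc_mono:
  assumes "i \<le> i'" "\<forall>j. w j \<subseteq> AP" "\<forall>j. u j \<subseteq> AP" "conc i' w u \<in> S"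
  shows "\<exists>u'. (\<forall>j. u' j \<subseteq> AP) \<and> conc i w u' \<in> S"
proof -
  let ?u = "\<lambda>j. conc i' w u (i + j)"
  have "conc i w ?u = conc i' w u" using assms(1) by (auto simp: conc_def fun_eq_iff)
  moreover have "\<forall>j. ?u j \<subseteq> AP" using assms(2,3) by (simp add: conc_def)
  ultimately show ?thesis using assms(4) by (intro exI[of _ ?u]) simp
qed

lemma cl_Un: assumes S: "cl AP S" and T: "cl AP T" shows "cl AP (S \<union> T)"
proof (rule clI)
  fix w assume w: "\<forall>j. w j \<subseteq> AP" and h: "\<And>i. i>0 \<Longrightarrow> \<exists>u. (\<forall>j. u j \<subseteq> AP) \<and> conc i w u \<in> S \<union> T"
  show "w \<in> S \<union> T"
  proof (cases "\<forall>i. \<exists>i'\<ge>i. \<exists>u. (\<forall>j. u j \<subseteq> AP) \<and> conc i' w u \<in> S")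
    case True
    have "w \<in> S"
    proof (rule clD[OF S w])
      fix i :: nat assume "i > 0"
      from True obtain i' u where "i' \<ge> i" "\<forall>j. u j \<subseteq> AP" "conc i' w u \<in> S" by blast
      then show "\<exists>u. (\<forall>j. u j \<subseteq> AP) \<and> conc i w u \<in> S" using conc_mono[of i i' w AP u S] w by blast
    qed
    then show ?thesis by simp
  next
    case False
    then obtain a where a: "\<And>i' u. i' \<ge> a \<Longrightarrow> \<forall>j. u j \<subseteq> AP \<Longrightarrow> conc i' w u \<notin> S" by blast
    have "w \<in> T"
    proof (rule clD[OF T w])
      fix i :: nat assume "i > 0"
      have "0 < max a i" using \<open>i>0\<close> by simp
      then obtain u where
        u: "\<forall>j. u j \<subseteq> AP" "conc (max a i) w u \<in> S \<union> T" using h by blast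
      have "conc (max a i) w u \<notin> S" using a[OF max.cobounded1 u(1)] .
      then have "conc (max a i) w u \<in> T" using u(2) by simp
      then show "\<exists>u. (\<forall>j. u j \<subseteq> AP) \<and> conc i w u \<in> T"
        using conc_mono[of i "max a i" w AP u T] w u(1) by simp
    qed
    then show ?thesis by simp
  qed
qed

lemma cl_INT: assumes "\<And>i. i \<in> I \<Longrightarrow> cl AP (F i)" shows "cl AP (\<Inter>i\<in>I. F i)"
proof (rule clI)
  fix w assume w: "\<forall>j. w j \<subseteq> AP" and h: "\<And>i. i>0 \<Longrightarrow> \<exists>u. (\<forall>j. u j \<subseteq> AP) \<and> conc i w u \<in> (\<Inter>i\<in>I. F i)"
  show "w \<in> (\<Inter>i\<in>I. F i)"
  proof
    fix x assume x: "x \<in> I"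
    show "w \<in> F x"
    proof (rule clD[OF assms[OF x] w])
      fix i :: nat assume "i > 0"
      then obtain u where "\<forall>j. u j \<subseteq> AP" "conc i w u \<in> (\<Inter>i\<in>I. F i)" using h by blast
      then show "\<exists>u. (\<forall>j. u j \<subseteq> AP) \<and> conc i w u \<in> F x" using x by blast
    qed
  qed
qed

lemma cl_Int: assumes "cl AP S" "cl AP T" shows "cl AP (S \<inter> T)"
proof -
  have "S \<inter> T = (\<Inter>b\<in>{True, False}. if b then S else T)" by auto
  moreover have "cl AP (\<Inter>b\<in>{True, False}. if b then S else T)" by (rule cl_INT) (use assms in auto)
  ultimately show ?thesis by simp
qed

lemma cl_empty: "cl AP {}"
proof (rule clI)
  fix w :: "nat \<Rightarrow> 'a set" assume "\<And>i. i>0 \<Longrightarrow> \<exists>u. (\<forall>j. u j \<subseteq> AP) \<and> conc i w u \<in> {}"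
  from this[of 1] show "w \<in> {}" by simp
qed

lemma cl_UNIV: "cl AP UNIV"
  unfolding cl_def by simp

lemma cl_UN: "finite I \<Longrightarrow> (\<And>i. i \<in> I \<Longrightarrow> cl AP (F i)) \<Longrightarrow> cl AP (\<Union>i\<in>I. F i)"
proof (induction I rule: finite_induct)
  case empty then show ?case using cl_empty by simp
next
  case (insert x I)
  then show ?case using cl_Un[of AP "F x" "\<Union>i\<in>I. F i"] by simp
qed

lemma suffix_conc: "suffix n (conc (i + n) w u) = conc i (suffix n w) u"
  by (auto simp: suffix_def conc_def fun_eq_iff)

lemma cl_shift: assumes S: "cl AP S" shows "cl AP {w. suffix n w \<in> S}"
proof (rule clI)
  fix w assume w: "\<forall>j. w j \<subseteq> AP" and h: "\<And>i. i>0 \<Longrightarrow> \<exists>u. (\<forall>j. u j \<subseteq> AP) \<and> conc i w u \<in> {w. suffix n w \<in> S}"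
  have "suffix n w \<in> S"
  proof (rule clD[OF S])
    show "\<forall>j. suffix n w j \<subseteq> AP" using w by (simp add: suffix_def)
    fix i :: nat assume "i > 0"
    then obtain u where "\<forall>j. u j \<subseteq> AP" "suffix n (conc (i+n) w u) \<in> S" using h[of "i+n"] by auto
    then show "\<exists>u. (\<forall>j. u j \<subseteq> AP) \<and> conc i (suffix n w) u \<in> S" unfolding suffix_conc by blast
  qed
  then show "w \<in> {w. suffix n w \<in> S}" by simp
qed

lemma cl_pos: "cl AP {w. P (w 0)}"
proof (rule clI)
  fix w :: "nat \<Rightarrow> 'a set" assume "\<And>i. i>0 \<Longrightarrow> \<exists>u. (\<forall>j. u j \<subseteq> AP) \<and> conc i w u \<in> {w. P (w 0)}"
  from this[of 1] obtain u where "conc 1 w u \<in> {w. P (w 0)}" by auto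
  then show "w \<in> {w. P (w 0)}" by (simp add: conc_def)
qed

lemma cl_eq: "cl AP S \<Longrightarrow> S = T \<Longrightarrow> cl AP T" by simp

lemma cl_WU:
  assumes X: "cl AP X" and Y: "cl AP Y"
  shows "cl AP {w. (\<forall>i. suffix i w \<in> X) \<or> (\<exists>i. suffix i w \<in> Y \<and> (\<forall>j<i. suffix j w \<in> X))}"
proof -
  define A where "A n = {w. (\<forall>i\<le>n. suffix i w \<in> X) \<or> (\<exists>i\<le>n. suffix i w \<in> Y \<and> (\<forall>j<i. suffix j w \<in> X))}" for n
  have eq: "(\<Inter>n\<in>UNIV. A n) = {w. (\<forall>i. suffix i w \<in> X) \<or> (\<exists>i. suffix i w \<in> Y \<and> (\<forall>j<i. suffix j w \<in> X))}"
  proof (intro set_eqI iffI)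
    fix w assume "w \<in> {w. (\<forall>i. suffix i w \<in> X) \<or> (\<exists>i. suffix i w \<in> Y \<and> (\<forall>j<i. suffix j w \<in> X))}"
    then consider "\<forall>i. suffix i w \<in> X" | i where "suffix i w \<in> Y" "\<forall>j<i. suffix j w \<in> X" by blast
    then show "w \<in> (\<Inter>n\<in>UNIV. A n)"
    proof cases
      case 1 then show ?thesis unfolding A_def by simp
    next
      case 2
      show ?thesis
      proof
        fix n
        show "w \<in> A n"
        proof (cases "i \<le> n")
          case True then show ?thesis unfolding A_def using 2 by blast
        next
          case False then have "\<forall>j\<le>n. suffix j w \<in> X" using 2 by simp
          then show ?thesis unfolding A_def by simp
        qed
      qed
    qed
  next
    fix w assume w: "w \<in> (\<Inter>n\<in>UNIV. A n)"
    show "w \<in> {w. (\<forall>i. suffix i w \<in> X) \<or> (\<exists>i. suffix i w \<in> Y \<and> (\<forall>j<i. suffix j w \<in> X))}"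
    proof (cases "\<forall>i. suffix i w \<in> X")
      case True then show ?thesis by simp
    next
      case False
      then obtain i0 where i0: "suffix i0 w \<notin> X" by blast
      define m where "m = (LEAST i. suffix i w \<notin> X)"
      have m1: "suffix m w \<notin> X" using i0 unfolding m_def by (rule LeastI)
      have m2: "\<forall>j<m. suffix j w \<in> X" unfolding m_def using not_less_Least by blast
      from w have "w \<in> A m" by blast
      then obtain i where "i \<le> m" "suffix i w \<in> Y" "\<forall>j<i. suffix j w \<in> X"
        unfolding A_def using m1 by auto
      then show ?thesis by auto
    qed
  qed
  have "cl AP (A n)" for n
  proof -
    have "(\<Inter>i\<in>{..n}. {w. suffix i w \<in> X}) \<union>
        (\<Union>i\<in>{..n}. {w. suffix i w \<in> Y} \<inter> (\<Inter>j\<in>{..<i}. {w. suffix j w \<in> X})) = A n"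
      unfolding A_def by (intro set_eqI) auto
    moreover have "cl AP ((\<Inter>i\<in>{..n}. {w. suffix i w \<in> X}) \<union>
        (\<Union>i\<in>{..n}. {w. suffix i w \<in> Y} \<inter> (\<Inter>j\<in>{..<i}. {w. suffix j w \<in> X})))"
    proof (rule cl_Un)
      show "cl AP (\<Inter>i\<in>{..n}. {w. suffix i w \<in> X})" by (intro cl_INT cl_shift X)
      show "cl AP (\<Union>i\<in>{..n}. {w. suffix i w \<in> Y} \<inter> (\<Inter>j\<in>{..<i}. {w. suffix j w \<in> X}))"
        by (intro cl_UN cl_Int cl_INT cl_shift X Y finite_atMost)
    qed
    ultimately show ?thesis by simp
  qed
  then have "cl AP (\<Inter>n\<in>UNIV. A n)" by (intro cl_INT)
  then show ?thesis unfolding eq .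
qed




locale tgpc =
  fixes K :: "'k tgp" and k :: 'k
  assumes ax: "idem_ordered_tgp K" and kz: "k \<noteq> zer K"
begin

abbreviation "z \<equiv> zer K"
abbreviation "ee \<equiv> one K"
abbreviation "le a b \<equiv> nle K a b"

lemmas axs = ax[unfolded idem_ordered_tgp_def]

lemma pl_assoc: "pl K (pl K a b) c = pl K a (pl K b c)"
  using axs[THEN conjunct1, rule_format] by blast
lemma pl_comm: "pl K a b = pl K b a"
  using axs[THEN conjunct2, THEN conjunct1, rule_format] by blast
lemma pl_zero: "pl K z a = a"
  using axs[THEN conjunct2, THEN conjunct2, THEN conjunct1, rule_format] by blast
lemma Sum_cong: "(\<forall>i\<in>I. f i = g i) \<Longrightarrow> Sum K f I = Sum K g I"
  using axs[THEN conjunct2, THEN conjunct2, THEN conjunct2, THEN conjunct1, rule_format] by blast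
lemma Sum_single: "Sum K f {j} = f j"
  using axs[THEN conjunct2, THEN conjunct2, THEN conjunct2, THEN conjunct2, THEN conjunct2, THEN conjunct1, rule_format] by blast
lemma Sum_two: "j \<noteq> l \<Longrightarrow> Sum K f {j, l} = pl K (f j) (f l)"
  using axs[THEN conjunct2, THEN conjunct2, THEN conjunct2, THEN conjunct2, THEN conjunct2, THEN conjunct2, THEN conjunct1, rule_format] by blast
lemma Sum_part: "(\<Union>j\<in>J. P j) = I \<Longrightarrow> (\<forall>j\<in>J. \<forall>j'\<in>J. j \<noteq> j' \<longrightarrow> P j \<inter> P j' = {}) \<Longrightarrow>
        Sum K f I = Sum K (\<lambda>j. Sum K f (P j)) J"
  using axs[THEN conjunct2, THEN conjunct2, THEN conjunct2, THEN conjunct2, THEN conjunct2, THEN conjunct2, THEN conjunct2, THEN conjunct1, rule_format, of P J I f] by blast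
lemma pl_idem: "pl K a a = a"
  using axs[THEN conjunct2, THEN conjunct2, THEN conjunct2, THEN conjunct2, THEN conjunct2, THEN conjunct2, THEN conjunct2, THEN conjunct2, THEN conjunct1, rule_format] by blast
lemma total: "le a b \<or> le b a"
  using axs[THEN conjunct2, THEN conjunct2, THEN conjunct2, THEN conjunct2, THEN conjunct2, THEN conjunct2, THEN conjunct2, THEN conjunct2, THEN conjunct2, THEN conjunct1, rule_format] by blast
lemma tm_zero: "tm K z a = z" "tm K a z = z"
  using axs[THEN conjunct2, THEN conjunct2, THEN conjunct2, THEN conjunct2, THEN conjunct2, THEN conjunct2, THEN conjunct2, THEN conjunct2, THEN conjunct2, THEN conjunct2, THEN conjunct1, rule_format] by auto
lemma tm_one: "tm K ee a = a" "tm K a ee = a"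
  using axs[THEN conjunct2, THEN conjunct2, THEN conjunct2, THEN conjunct2, THEN conjunct2, THEN conjunct2, THEN conjunct2, THEN conjunct2, THEN conjunct2, THEN conjunct2, THEN conjunct2, THEN conjunct1, rule_format] by auto
lemma Val_zero: "fin_valued s \<Longrightarrow> s i = z \<Longrightarrow> Val K s = z"
  using axs[THEN conjunct2, THEN conjunct2, THEN conjunct2, THEN conjunct2, THEN conjunct2, THEN conjunct2, THEN conjunct2, THEN conjunct2, THEN conjunct2, THEN conjunct2, THEN conjunct2, THEN conjunct2, THEN conjunct1, rule_format] by blast
lemma Val_one: "Val K (\<lambda>_. ee) = ee"
  by (rule axs[THEN conjunct2, THEN conjunct2, THEN conjunct2, THEN conjunct2, THEN conjunct2, THEN conjunct2, THEN conjunct2, THEN conjunct2, THEN conjunct2, THEN conjunct2, THEN conjunct2, THEN conjunct2, THEN conjunct2, THEN conjunct1])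
lemma Sum_tm: "Sum K (\<lambda>_. tm K a ee) I = tm K a (Sum K (\<lambda>_. ee) I)"
  using axs[THEN conjunct2, THEN conjunct2, THEN conjunct2, THEN conjunct2, THEN conjunct2, THEN conjunct2, THEN conjunct2, THEN conjunct2, THEN conjunct2, THEN conjunct2, THEN conjunct2, THEN conjunct2, THEN conjunct2, THEN conjunct2, THEN conjunct1, rule_format] by blast
lemma le_one: "le a ee"
  using axs[THEN conjunct2, THEN conjunct2, THEN conjunct2, THEN conjunct2, THEN conjunct2, THEN conjunct2, THEN conjunct2, THEN conjunct2, THEN conjunct2, THEN conjunct2, THEN conjunct2, THEN conjunct2, THEN conjunct2, THEN conjunct2, THEN conjunct2, THEN conjunct2, THEN conjunct2, THEN conjunct2, THEN conjunct1, rule_format] by blast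
lemma Val_ge: "fin_valued s \<Longrightarrow> (\<forall>i. le a (s i)) \<Longrightarrow> le a (Val K s)"
  using axs[THEN conjunct2, THEN conjunct2, THEN conjunct2, THEN conjunct2, THEN conjunct2, THEN conjunct2, THEN conjunct2, THEN conjunct2, THEN conjunct2, THEN conjunct2, THEN conjunct2, THEN conjunct2, THEN conjunct2, THEN conjunct2, THEN conjunct2, THEN conjunct2, THEN conjunct2, THEN conjunct2, THEN conjunct2, rule_format] by blast

lemma pl_cases: "pl K a b = a \<or> pl K a b = b"
proof (cases "le a b")
  case True then have "b = pl K b a" unfolding nle_def .
  then show ?thesis using pl_comm[of a b] by simp
next
  case False then have "le b a" using total by blast
  then have "a = pl K a b" unfolding nle_def .
  then show ?thesis by simp
qed
lemma le_pl1: "le a (pl K a b)" unfolding nle_def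
proof -
  have "pl K (pl K a b) a = pl K a (pl K a b)" by (rule pl_comm)
  also have "\<dots> = pl K (pl K a a) b" by (rule pl_assoc[symmetric])
  finally show "pl K a b = pl K (pl K a b) a" by (simp add: pl_idem)
qed
lemma le_pl2: "le b (pl K a b)" using le_pl1[of b a] pl_comm[of a b] by simp
lemma le_trans: "le a b \<Longrightarrow> le b c \<Longrightarrow> le a c" unfolding nle_def
proof -
  assume ab: "b = pl K b a" and bc: "c = pl K c b"
  have "pl K c a = pl K (pl K c b) a" using bc by simp
  also have "\<dots> = pl K c (pl K b a)" by (rule pl_assoc)
  also have "\<dots> = c" using ab bc by simp
  finally show "c = pl K c a" by simp
qed
lemma le_antisym: "le a b \<Longrightarrow> le b a \<Longrightarrow> a = b" unfolding nle_def
  using pl_comm[of a b] by simp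
lemma le_zero: "le z a" unfolding nle_def using pl_comm[of a z] pl_zero[of a] by simp
lemma not_le_k_zero: "\<not> le k z" unfolding nle_def using kz pl_zero[of k] by simp
lemma o_ne_z: "ee \<noteq> z" using kz tm_one(1)[of k] tm_zero(1)[of k] by auto
lemma le_k_one: "le k ee" by (rule le_one)

lemma le_pl_iff: "le k (pl K a b) \<longleftrightarrow> le k a \<or> le k b"
proof
  assume h: "le k (pl K a b)"
  show "le k a \<or> le k b"
  proof (cases "pl K a b = a")
    case True then show ?thesis using h by simp
  next
    case False then have "pl K a b = b" using pl_cases by blast
    then show ?thesis using h by simp
  qed
next
  assume "le k a \<or> le k b"
  then show "le k (pl K a b)"
    using le_trans[OF _ le_pl1[of a b]] le_trans[OF _ le_pl2[of b a]] by blast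
qed

definition dich :: "'k \<Rightarrow> bool" where "dich v \<longleftrightarrow> v = z \<or> le k v"

lemma dich_iff: "dich v \<Longrightarrow> le k v \<longleftrightarrow> v \<noteq> z"
  unfolding dich_def using not_le_k_zero by metis

lemma Sum_zero: assumes "\<forall>i\<in>I. f i = z" shows "Sum K f I = z"
proof -
  have "Sum K f I = Sum K (\<lambda>_. tm K z ee) I" using assms by (intro Sum_cong) (simp add: tm_zero)
  also have "\<dots> = z" unfolding Sum_tm by (rule tm_zero(1))
  finally show ?thesis .
qed

lemma Sum_ge: assumes "i \<in> I" shows "le (f i) (Sum K f I)"
proof -
  define j1 :: idx where "j1 = (\<lambda>_. 0)"
  define j2 :: idx where "j2 = (\<lambda>_. 1)"
  have ne: "j1 \<noteq> j2" unfolding j1_def j2_def by (metis One_nat_def n_not_Suc_n)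
  define P where "P j = (if j = j1 then {i} else I - {i})" for j
  have "Sum K f I = Sum K (\<lambda>j. Sum K f (P j)) {j1, j2}"
    by (rule Sum_part) (use assms ne in \<open>auto simp: P_def\<close>)
  also have "\<dots> = pl K (Sum K f {i}) (Sum K f (I - {i}))"
    using ne by (simp add: Sum_two P_def)
  finally show ?thesis by (simp add: Sum_single le_pl1)
qed

lemma Sum_dich: assumes "\<forall>i\<in>I. dich (f i)"
  shows "dich (Sum K f I)" "le k (Sum K f I) \<longleftrightarrow> (\<exists>i\<in>I. f i \<noteq> z)"
proof -
  have "le k (Sum K f I)" if "\<exists>i\<in>I. f i \<noteq> z"
  proof -
    from that obtain i where i: "i \<in> I" "f i \<noteq> z" by blast
    then have "le k (f i)" using assms dich_iff by blast
    then show ?thesis using le_trans Sum_ge[OF i(1)] by blast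
  qed
  moreover have "\<not>(\<exists>i\<in>I. f i \<noteq> z) \<Longrightarrow> Sum K f I = z" using Sum_zero by blast
  ultimately show "dich (Sum K f I)" "le k (Sum K f I) \<longleftrightarrow> (\<exists>i\<in>I. f i \<noteq> z)"
    unfolding dich_def using not_le_k_zero by (cases "\<exists>i\<in>I. f i \<noteq> z"; simp)+
qed

lemma Sum_bool: assumes "\<forall>i\<in>I. f i \<in> {z, ee}" shows "Sum K f I \<in> {z, ee}"
proof (cases "\<exists>i\<in>I. f i = ee")
  case True
  then obtain i where "i \<in> I" "f i = ee" by blast
  then have "le ee (Sum K f I)" using Sum_ge by metis
  then show ?thesis using le_one le_antisym by blast
next
  case False then show ?thesis using assms Sum_zero by auto
qed

lemma Val_dich: assumes "fin_valued s" "\<forall>i. dich (s i)"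
  shows "dich (Val K s)" "le k (Val K s) \<longleftrightarrow> (\<forall>i. s i \<noteq> z)"
proof -
  have "le k (Val K s)" if "\<forall>i. s i \<noteq> z"
    using that assms dich_iff Val_ge[of s k] by blast
  moreover have "\<not>(\<forall>i. s i \<noteq> z) \<Longrightarrow> Val K s = z" using Val_zero assms by blast
  ultimately show "dich (Val K s)" "le k (Val K s) \<longleftrightarrow> (\<forall>i. s i \<noteq> z)"
    unfolding dich_def using not_le_k_zero by (cases "\<forall>i. s i \<noteq> z"; simp)+
qed

lemma Val_bool: assumes "fin_valued s" "\<forall>i. s i \<in> {z, ee}" shows "Val K s \<in> {z, ee}"
proof (cases "\<exists>i. s i = z")
  case True then show ?thesis using Val_zero assms by blast
next
  case False
  then have "s = (\<lambda>_. ee)" using assms by (auto simp: fun_eq_iff)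
  then show ?thesis using Val_one by simp
qed

lemma sumN_dich: assumes "\<forall>n. dich (g n)"
  shows "dich (sumN K g UNIV)" "le k (sumN K g UNIV) \<longleftrightarrow> (\<exists>n. g n \<noteq> z)"
  using Sum_dich[of "(\<lambda>n (_::nat). n) ` UNIV" "\<lambda>f. g (f 0)"] assms unfolding sumN_def by auto

lemma sumN_bool: assumes "\<forall>n. g n \<in> {z, ee}" shows "sumN K g UNIV \<in> {z, ee}"
  using Sum_bool[of "(\<lambda>n (_::nat). n) ` UNIV" "\<lambda>f. g (f 0)"] assms unfolding sumN_def by auto

end



context tgpc begin

definition dichF :: "('k, 'a) wltl \<Rightarrow> bool" where "dichF p \<longleftrightarrow> (\<forall>w. dich (sem K p w))"
definition finF :: "('k, 'a) wltl \<Rightarrow> bool" where "finF p \<longleftrightarrow> (\<exists>V. finite V \<and> (\<forall>w. sem K p w \<in> V))"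
definition boolF :: "('k, 'a) wltl \<Rightarrow> bool" where "boolF p \<longleftrightarrow> (\<forall>w. sem K p w \<in> {z, ee})"
definition cloF :: "'a set \<Rightarrow> ('k, 'a) wltl \<Rightarrow> bool" where "cloF AP p \<longleftrightarrow> cl AP {w. le k (sem K p w)}"

lemma dich_z: "dich z" unfolding dich_def by simp
lemma dich_ee: "dich ee" unfolding dich_def using le_one by simp

lemma bool_dich: assumes "boolF p" shows "dichF p"
  unfolding dichF_def
proof
  fix w
  have "sem K p w = z \<or> sem K p w = ee" using assms unfolding boolF_def by blast
  then show "dich (sem K p w)" using dich_z dich_ee by auto
qed

lemma bool_fin: "boolF p \<Longrightarrow> finF p"
  unfolding boolF_def finF_def by (intro exI[of _ "{z, ee}"]) simp

lemma bool_le: assumes "boolF p" shows "le k (sem K p w) \<longleftrightarrow> sem K p w = ee"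
proof -
  have "sem K p w = z \<or> sem K p w = ee" using assms unfolding boolF_def by blast
  then show ?thesis using le_one not_le_k_zero o_ne_z by auto
qed

lemma fin_valued_sub: "finite V \<Longrightarrow> (\<And>i. s i \<in> V) \<Longrightarrow> fin_valued s"
  unfolding fin_valued_def by (meson finite_subset image_subsetI)

lemma Box_sem:
  assumes "finF p" "dichF p"
  shows "dich (sem K (Box p) w)" "le k (sem K (Box p) w) \<longleftrightarrow> (\<forall>i. le k (sem K p (suffix i w)))"
proof -
  obtain V where V: "finite V" "\<forall>w. sem K p w \<in> V" using assms(1) unfolding finF_def by blast
  have fv: "fin_valued (\<lambda>i. sem K p (suffix i w))" using V by (intro fin_valued_sub[of V]) auto
  have d: "\<forall>i. dich (sem K p (suffix i w))" using assms(2) unfolding dichF_def by blast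
  show "dich (sem K (Box p) w)" using Val_dich(1)[OF fv d] by simp
  show "le k (sem K (Box p) w) \<longleftrightarrow> (\<forall>i. le k (sem K p (suffix i w)))"
    using Val_dich(2)[OF fv d] d dich_iff by simp
qed

lemma Until_sem:
  assumes "finF p" "dichF p" "finF q" "dichF q"
  shows "dich (sem K (Until p q) w)"
    "le k (sem K (Until p q) w) \<longleftrightarrow> (\<exists>i. le k (sem K q (suffix i w)) \<and> (\<forall>j<i. le k (sem K p (suffix j w))))"
proof -
  obtain V where V: "finite V" "\<forall>w. sem K p w \<in> V" using assms(1) unfolding finF_def by blast
  obtain W where W: "finite W" "\<forall>w. sem K q w \<in> W" using assms(3) unfolding finF_def by blast
  define sq where "sq i = (\<lambda>j. if j < i then sem K p (suffix j w)
                             else if j = i then sem K q (suffix i w) else ee)" for i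
  have dp: "\<And>v. dich (sem K p v)" and dq: "\<And>v. dich (sem K q v)" using assms(2,4) unfolding dichF_def by blast+
  have fv: "fin_valued (sq i)" for i
    using V W by (intro fin_valued_sub[of "V \<union> W \<union> {ee}"]) (auto simp: sq_def)
  have d: "\<forall>j. dich (sq i j)" for i using dp dq dich_ee by (simp add: sq_def)
  have g: "\<forall>i. dich (Val K (sq i))" using Val_dich(1)[OF fv d] by blast
  have sem_eq: "sem K (Until p q) w = sumN K (\<lambda>i. Val K (sq i)) UNIV" by (simp add: sq_def)
  show "dich (sem K (Until p q) w)" unfolding sem_eq using sumN_dich(1)[OF g] .
  have "Val K (sq i) \<noteq> z \<longleftrightarrow> le k (sem K q (suffix i w)) \<and> (\<forall>j<i. le k (sem K p (suffix j w)))" for i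
  proof -
    have "Val K (sq i) \<noteq> z \<longleftrightarrow> le k (Val K (sq i))" using g dich_iff by blast
    also have "\<dots> \<longleftrightarrow> (\<forall>j. sq i j \<noteq> z)" using Val_dich(2)[OF fv d] .
    also have "\<dots> \<longleftrightarrow> sem K q (suffix i w) \<noteq> z \<and> (\<forall>j<i. sem K p (suffix j w) \<noteq> z)"
    proof
      assume h: "\<forall>j. sq i j \<noteq> z"
      show "sem K q (suffix i w) \<noteq> z \<and> (\<forall>j<i. sem K p (suffix j w) \<noteq> z)"
      proof
        show "sem K q (suffix i w) \<noteq> z" using h[rule_format, of i] by (simp add: sq_def)
        show "\<forall>j<i. sem K p (suffix j w) \<noteq> z"
        proof (intro allI impI)
          fix j assume "j < i" then show "sem K p (suffix j w) \<noteq> z" using h[rule_format, of j] by (simp add: sq_def)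
        qed
      qed
    next
      assume "sem K q (suffix i w) \<noteq> z \<and> (\<forall>j<i. sem K p (suffix j w) \<noteq> z)"
      then show "\<forall>j. sq i j \<noteq> z" using o_ne_z by (simp add: sq_def)
    qed
    also have "\<dots> \<longleftrightarrow> le k (sem K q (suffix i w)) \<and> (\<forall>j<i. le k (sem K p (suffix j w)))"
      using dp dq dich_iff by simp
    finally show ?thesis .
  qed
  then show "le k (sem K (Until p q) w) \<longleftrightarrow> (\<exists>i. le k (sem K q (suffix i w)) \<and> (\<forall>j<i. le k (sem K p (suffix j w))))"
    unfolding sem_eq using sumN_dich(2)[OF g] by simp
qed

lemma suffix0: "suffix 0 w = w" by (simp add: suffix_def)

lemma Box_props:
  assumes "finF p" "dichF p" "cloF AP p"
  shows "dichF (Box p)" "cloF AP (Box p)"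
proof -
  show "dichF (Box p)" using Box_sem(1)[OF assms(1,2)] unfolding dichF_def by blast
  have "{w. le k (sem K (Box p) w)} = (\<Inter>i\<in>UNIV. {w. suffix i w \<in> {w. le k (sem K p w)}})"
    using Box_sem(2)[OF assms(1,2)] by auto
  moreover have "cl AP (\<Inter>i\<in>UNIV. {w. suffix i w \<in> {w. le k (sem K p w)}})"
    using assms(3) unfolding cloF_def by (intro cl_INT cl_shift)
  ultimately show "cloF AP (Box p)" unfolding cloF_def by simp
qed

lemma WU_props:
  assumes "finF p" "dichF p" "cloF AP p" "finF q" "dichF q" "cloF AP q"
  shows "dichF (WUntil p q)" "cloF AP (WUntil p q)"
proof -
  have s: "sem K (WUntil p q) w = pl K (sem K (Box p) w) (sem K (Until p q) w)" for w
    unfolding WUntil_def by simp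
  show "dichF (WUntil p q)" unfolding dichF_def s
    using Box_sem(1)[OF assms(1,2)] Until_sem(1)[OF assms(1,2,4,5)] pl_cases by metis
  have "{w. le k (sem K (WUntil p q) w)} =
     {w. (\<forall>i. suffix i w \<in> {w. le k (sem K p w)}) \<or>
         (\<exists>i. suffix i w \<in> {w. le k (sem K q w)} \<and> (\<forall>j<i. suffix j w \<in> {w. le k (sem K p w)}))}"
    unfolding s le_pl_iff Box_sem(2)[OF assms(1,2)] Until_sem(2)[OF assms(1,2,4,5)] by simp
  moreover have "cl AP {w. (\<forall>i. suffix i w \<in> {w. le k (sem K p w)}) \<or>
         (\<exists>i. suffix i w \<in> {w. le k (sem K q w)} \<and> (\<forall>j<i. suffix j w \<in> {w. le k (sem K p w)}))}"
    using assms(3,6) unfolding cloF_def by (rule cl_WU)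
  ultimately show "cloF AP (WUntil p q)" unfolding cloF_def by simp
qed

lemma Box_bool: assumes "boolF p" shows "boolF (Box p)"
  unfolding boolF_def
proof
  fix w
  have "fin_valued (\<lambda>i. sem K p (suffix i w))" by (rule fin_valued_sub[of "{z, ee}"]) (use assms in \<open>auto simp: boolF_def\<close>)
  then show "sem K (Box p) w \<in> {z, ee}" using Val_bool assms unfolding boolF_def by simp
qed

lemma WU_bool: assumes "boolF p" "boolF q" shows "boolF (WUntil p q)"
  unfolding boolF_def
proof
  fix w
  define sq where "sq i = (\<lambda>j. if j < i then sem K p (suffix j w)
                             else if j = i then sem K q (suffix i w) else ee)" for i
  have b: "\<forall>j. sq i j \<in> {z, ee}" for i using assms unfolding boolF_def sq_def by simp
  have "fin_valued (sq i)" for i using b by (intro fin_valued_sub[of "{z, ee}"]) auto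
  then have "\<forall>i. Val K (sq i) \<in> {z, ee}" using Val_bool b by blast
  then have "sem K (Until p q) w \<in> {z, ee}" using sumN_bool by (simp add: sq_def)
  moreover have "sem K (Box p) w \<in> {z, ee}" using Box_bool[OF assms(1)] unfolding boolF_def by blast
  ultimately show "sem K (WUntil p q) w \<in> {z, ee}" unfolding WUntil_def using pl_cases
    by (metis sem.simps(4))
qed

lemma and_pt: assumes "v = z \<or> v = ee"
  shows "le k (tm K v u) \<longleftrightarrow> le k v \<and> le k u" "le k (tm K u v) \<longleftrightarrow> le k v \<and> le k u"
  using assms
  by (auto simp: tm_zero tm_one not_le_k_zero le_one)

lemma and_set1: assumes "boolF p" shows "{w. le k (sem K (And p q) w)} = {w. le k (sem K p w)} \<inter> {w. le k (sem K q w)}"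
proof -
  have "\<And>w. sem K p w = z \<or> sem K p w = ee" using assms unfolding boolF_def by blast
  then show ?thesis using and_pt(1) by auto
qed
lemma and_set2: assumes "boolF p" shows "{w. le k (sem K (And q p) w)} = {w. le k (sem K p w)} \<inter> {w. le k (sem K q w)}"
proof -
  have "\<And>w. sem K p w = z \<or> sem K p w = ee" using assms unfolding boolF_def by blast
  then show ?thesis using and_pt(2) by auto
qed

lemma or_set: "{w. le k (sem K (Or p q) w)} = {w. le k (sem K p w)} \<union> {w. le k (sem K q w)}"
  using le_pl_iff by auto

lemma sb_props: "p \<in> sbLTL K \<Longrightarrow> boolF p \<and> cloF AP p"
proof (induction p rule: sbLTL.induct)
  case 1
  then show ?case unfolding boolF_def cloF_def wtrue_def using le_one cl_UNIV by simp
next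
  case (2 a)
  have "{w. le k (sem K (Atom a) w)} = {w. a \<in> w 0}" using le_one not_le_k_zero by auto
  then show ?case unfolding boolF_def cloF_def using cl_pos by simp
next
  case (3 a)
  have "{w. le k (sem K (NAtom a) w)} = {w. a \<notin> w 0}" using le_one not_le_k_zero by auto
  then show ?case unfolding boolF_def cloF_def using cl_pos by simp
next
  case (4 p q)
  then show ?case unfolding cloF_def or_set using cl_Un unfolding boolF_def using pl_cases
    by (metis sem.simps(4))
next
  case (5 p q)
  have "boolF (And p q)" unfolding boolF_def
  proof
    fix w
    have "sem K p w = z \<or> sem K p w = ee" "sem K q w = z \<or> sem K q w = ee"
      using 5 unfolding boolF_def by blast+
    then show "sem K (And p q) w \<in> {z, ee}" by (auto simp: tm_zero tm_one)
  qed
  then show ?case using 5 unfolding cloF_def and_set1[of p q, OF conjunct1[OF "5.IH"(1)]] using cl_Int by blast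
next
  case (6 p)
  have "{w. le k (sem K (Next p) w)} = {w. suffix 1 w \<in> {w. le k (sem K p w)}}" by simp
  moreover have "cl AP {w. suffix 1 w \<in> {w. le k (sem K p w)}}"
    using 6 unfolding cloF_def by (intro cl_shift) blast
  moreover have "boolF (Next p)" using 6 unfolding boolF_def by simp
  ultimately show ?case unfolding cloF_def by simp
next
  case (7 p q)
  then show ?case using WU_bool WU_props(2) bool_fin bool_dich by blast
next
  case (8 p)
  then show ?case using Box_bool Box_props(2) bool_fin bool_dich by blast
qed

end



context tgpc begin

lemma st_item:
  assumes c: "c \<in> Lk K k - {z, ee}" and p: "p \<in> sbLTL K"
  shows "finF (And (Const c) p) \<and> dichF (And (Const c) p) \<and> cloF AP (And (Const c) p)"
proof -
  have bp: "boolF p" and cp: "cloF AP p" using sb_props[OF p] by blast+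
  have kc: "le k c" using c unfolding Lk_def by simp
  have vals: "sem K (And (Const c) p) w = z \<or> sem K (And (Const c) p) w = c" for w
  proof -
    have "sem K p w = z \<or> sem K p w = ee" using bp unfolding boolF_def by blast
    then show ?thesis by (auto simp: tm_zero tm_one)
  qed
  have "finF (And (Const c) p)" unfolding finF_def using vals by (intro exI[of _ "{z, c}"]) auto
  moreover have "dichF (And (Const c) p)" unfolding dichF_def dich_def using vals kc by metis
  moreover have "cloF AP (And (Const c) p)"
  proof -
    have "{w. le k (sem K (And (Const c) p) w)} = {w. le k (sem K p w)} \<inter> {w. le k (sem K (Const c) w)}"
      by (rule and_set2[OF bp])
    also have "\<dots> = {w. le k (sem K p w)}" using kc by auto
    finally show ?thesis using cp unfolding cloF_def by simp
  qed
  ultimately show ?thesis by blast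
qed

lemma or_props:
  assumes "finF p \<and> dichF p \<and> cloF AP p" "finF q \<and> dichF q \<and> cloF AP q"
  shows "finF (Or p q) \<and> dichF (Or p q) \<and> cloF AP (Or p q)"
proof -
  obtain V where V: "finite V" "\<forall>w. sem K p w \<in> V" using assms(1) unfolding finF_def by blast
  obtain W where W: "finite W" "\<forall>w. sem K q w \<in> W" using assms(2) unfolding finF_def by blast
  have "finF (Or p q)" unfolding finF_def
  proof (intro exI[of _ "V \<union> W"] conjI allI)
    show "finite (V \<union> W)" using V W by simp
    fix w show "sem K (Or p q) w \<in> V \<union> W" using V W pl_cases[of "sem K p w" "sem K q w"] by auto
  qed
  moreover have "dichF (Or p q)" unfolding dichF_def
  proof
    fix w
    have "dich (sem K p w)" "dich (sem K q w)" using assms unfolding dichF_def by blast+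
    then show "dich (sem K (Or p q) w)" using pl_cases[of "sem K p w" "sem K q w"] by auto
  qed
  moreover have "cloF AP (Or p q)" unfolding cloF_def or_set
    using assms unfolding cloF_def by (intro cl_Un) blast+
  ultimately show ?thesis by blast
qed

lemma st_list:
  "xs \<noteq> [] \<Longrightarrow> (\<forall>(c, p) \<in> set xs. c \<in> Lk K k - {z, ee} \<and> p \<in> sbLTL K) \<Longrightarrow>
   finF (BigOr (map (\<lambda>(c, p). And (Const c) p) xs)) \<and> dichF (BigOr (map (\<lambda>(c, p). And (Const c) p) xs))
   \<and> cloF AP (BigOr (map (\<lambda>(c, p). And (Const c) p) xs))"
proof (induction xs)
  case Nil then show ?case by simp
next
  case (Cons x xs)
  obtain c p where x: "x = (c, p)" by fastforce
  have hx: "finF (And (Const c) p) \<and> dichF (And (Const c) p) \<and> cloF AP (And (Const c) p)"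
    using Cons.prems(2) x by (intro st_item) auto
  show ?case
  proof (cases xs)
    case Nil then show ?thesis using hx x by simp
  next
    case (Cons y ys)
    have ih: "finF (BigOr (map (\<lambda>(c, p). And (Const c) p) xs)) \<and> dichF (BigOr (map (\<lambda>(c, p). And (Const c) p) xs))
   \<and> cloF AP (BigOr (map (\<lambda>(c, p). And (Const c) p) xs))"
      using Cons.IH Cons.prems(2) Cons by simp
    have "BigOr (map (\<lambda>(c, p). And (Const c) p) (x # xs)) = Or (And (Const c) p) (BigOr (map (\<lambda>(c, p). And (Const c) p) xs))"
      using x Cons by simp
    then show ?thesis using or_props[OF hx ih] by simp
  qed
qed

lemma st_props: "p \<in> stLTL K k \<Longrightarrow> finF p \<and> dichF p \<and> cloF AP p"
  unfolding stLTL_def using st_list by blast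

lemma rultl_props: "p \<in> RULTL K k \<Longrightarrow> cloF AP p"
proof (induction p rule: RULTL.induct)
  case (1 c)
  then have "{w. le k (sem K (Const c) w)} = UNIV" unfolding Lk_def by simp
  then show ?case unfolding cloF_def using cl_UNIV by metis
next
  case (2 p) then show ?case using sb_props by blast
next
  case (3 p) then show ?case using st_props by blast
next
  case (4 p)
  have "{w. le k (sem K (Next p) w)} = {w. suffix 1 w \<in> {w. le k (sem K p w)}}" by simp
  moreover have "cl AP {w. suffix 1 w \<in> {w. le k (sem K p w)}}"
    using 4 unfolding cloF_def by (intro cl_shift) blast
  ultimately show ?case unfolding cloF_def by simp
next
  case (5 p q)
  then show ?case using or_props st_props by blast
next
  case (6 p q)
  have bp: "boolF p" and cp: "cloF AP p" using sb_props[OF 6(1)] by blast+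
  have cq: "cloF AP q" using 6(2) st_props WU_props(2) Box_props(2) by blast
  show ?case unfolding cloF_def and_set1[OF bp] using cp cq unfolding cloF_def by (intro cl_Int)
next
  case (7 p q)
  have bp: "boolF p" and cp: "cloF AP p" using sb_props[OF 7(1)] by blast+
  have cq: "cloF AP q" using 7(2) st_props WU_props(2) Box_props(2) by blast
  show ?case unfolding cloF_def and_set2[OF bp] using cp cq unfolding cloF_def by (intro cl_Int)
next
  case (8 p q)
  then show ?case using st_props WU_props(2) by blast
next
  case (9 p)
  then show ?case using st_props Box_props(2) by blast
qed

end

theorem corollary1:
  fixes K :: "'k tgp" and AP :: "'a set" and k :: 'k and \<phi> :: "('k, 'a) wltl"
  assumes "idem_ordered_tgp K"
    and "finite AP"
    and "k \<noteq> zer K" and "k \<noteq> one K"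
    and "\<phi> \<in> RULTL K k"
    and "atoms \<phi> \<subseteq> AP"
  shows "k_safe K AP k (sem K \<phi>)"
proof -
  interpret tgpc K k using assms(1,3) by unfold_locales
  have "cloF AP \<phi>" using rultl_props[OF assms(5)] .
  then show ?thesis unfolding k_safe_cl cloF_def .
qed


end
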